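(* Let $\mathcal{H}$ be a complex Hilbert space, $A\in\mathcal{B}(\mathcal{H})$ positive and $S\in\mathcal{B}_A(\mathcal{H})$. Then $$d\omega_A^2(S)\le\frac14\left\|S^{\sharp_A}S+SS^{\sharp_A}+4\left(S^{\sharp_A}S\right)^2\right\|_A+\frac12\,\omega_A\left(S^2\right).$$
   Context: $\mathcal{B}(\mathcal{H})$ denotes the bounded linear operators on $\mathcal{H}$. For positive $A$, $\langle x,z\rangle_A=\langle Ax,z\rangle$ and $\|z\|_A=\|A^{1/2}z\|$. $\mathcal{B}_A(\mathcal{H})$ is the set of $S\in\mathcal{B}(\mathcal{H})$ for which some $R\in\mathcal{B}(\mathcal{H})$ satisfies $AR=S^*A$; for such $S$, $S^{\sharp_A}=A^{\dagger}S^*A$ with $A^\dagger$ the Moore–Penrose inverse of $A$. For operators $T$ bounded with respect to $\|\cdot\|_A$: $\|T\|_A=\sup_{\|z\|_A=1}\|Tz\|_A$, $\omega_A(T)=\sup_{\|z\|_A=1}|\langle Tz,z\rangle_A|$, and $d\omega_A(T)=\sup_{\|z\|_A=1}(|\langle Tz,z\rangle_A|^2+\|Tz\|_A^4)^{1/2}$. *)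

theory Defs
  imports "HOL-Analysis.Analysis"
begin

class complex_hilbert = banach +
  fixes scaleC :: "complex \<Rightarrow> 'a \<Rightarrow> 'a"
    and cinner :: "'a \<Rightarrow> 'a \<Rightarrow> complex"
  assumes scaleC_add_right: "scaleC c (x + y) = scaleC c x + scaleC c y"
    and scaleC_add_left: "scaleC (c + d) x = scaleC c x + scaleC d x"
    and scaleC_scaleC: "scaleC c (scaleC d x) = scaleC (c * d) x"
    and scaleC_one: "scaleC 1 x = x"
    and scaleC_of_real: "scaleC (complex_of_real r) x = scaleR r x"
    and cinner_add_left: "cinner (x + y) z = cinner x z + cinner y z"
    and cinner_scaleC_left: "cinner (scaleC c x) y = c * cinner x y"
    and cinner_commute: "cinner y x = cnj (cinner x y)"
    and cinner_self_real: "Im (cinner x x) = 0"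
    and cinner_self_nonneg: "0 \<le> Re (cinner x x)"
    and cinner_self_eq_0: "cinner x x = 0 \<longleftrightarrow> x = 0"
    and norm_eq_sqrt_cinner: "norm x = sqrt (Re (cinner x x))"

definition bounded_op :: "('a::complex_hilbert \<Rightarrow> 'a) \<Rightarrow> bool" where
  "bounded_op T \<longleftrightarrow> (\<forall>x y. T (x + y) = T x + T y) \<and> (\<forall>c x. T (scaleC c x) = scaleC c (T x))
     \<and> (\<exists>K. \<forall>x. norm (T x) \<le> K * norm x)"

definition adj :: "('a::complex_hilbert \<Rightarrow> 'a) \<Rightarrow> ('a \<Rightarrow> 'a)" where
  "adj S = (THE T. \<forall>x y. cinner (S x) y = cinner x (T y))"

definition positive_op :: "('a::complex_hilbert \<Rightarrow> 'a) \<Rightarrow> bool" where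
  "positive_op A \<longleftrightarrow> bounded_op A \<and> (\<forall>x. Im (cinner (A x) x) = 0 \<and> 0 \<le> Re (cinner (A x) x))"

text \<open>Moore--Penrose inverse of A (a possibly unbounded operator defined on
R(A) + R(A)^\<bottom>): for y in that domain, it is the unique x \<in> N(A)^\<bottom> with
A x = P_{closure R(A)} y, i.e. A x - y \<bottom> R(A). Outside the domain the value is unspecified.\<close>
definition mp_inverse :: "('a::complex_hilbert \<Rightarrow> 'a) \<Rightarrow> 'a \<Rightarrow> 'a" where
  "mp_inverse A y = (THE x. (\<forall>n. A n = 0 \<longrightarrow> cinner x n = 0) \<and> (\<forall>z. cinner (A x - y) (A z) = 0))"

definition BA :: "('a::complex_hilbert \<Rightarrow> 'a) \<Rightarrow> ('a \<Rightarrow> 'a) set" where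
  "BA A = {S. bounded_op S \<and> (\<exists>R. bounded_op R \<and> (\<forall>x. A (R x) = adj S (A x)))}"

definition sharpA :: "('a::complex_hilbert \<Rightarrow> 'a) \<Rightarrow> ('a \<Rightarrow> 'a) \<Rightarrow> ('a \<Rightarrow> 'a)" where
  "sharpA A S = (\<lambda>x. mp_inverse A (adj S (A x)))"

definition innerA :: "('a::complex_hilbert \<Rightarrow> 'a) \<Rightarrow> 'a \<Rightarrow> 'a \<Rightarrow> complex" where
  "innerA A x z = cinner (A x) z"

definition normA :: "('a::complex_hilbert \<Rightarrow> 'a) \<Rightarrow> 'a \<Rightarrow> real" where
  "normA A z = sqrt (Re (cinner (A z) z))"

text \<open>Suprema over {z. \<parallel>z\<parallel>_A = 1}. All quantities are nonnegative; 0 is inserted so that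
the (degenerate) empty supremum, occurring only for A = 0, is 0.\<close>
definition opnormA :: "('a::complex_hilbert \<Rightarrow> 'a) \<Rightarrow> ('a \<Rightarrow> 'a) \<Rightarrow> real" where
  "opnormA A T = Sup (insert 0 {normA A (T z) | z. normA A z = 1})"

definition numradA :: "('a::complex_hilbert \<Rightarrow> 'a) \<Rightarrow> ('a \<Rightarrow> 'a) \<Rightarrow> real" where
  "numradA A T = Sup (insert 0 {cmod (innerA A (T z) z) | z. normA A z = 1})"

definition dnumradA :: "('a::complex_hilbert \<Rightarrow> 'a) \<Rightarrow> ('a \<Rightarrow> 'a) \<Rightarrow> real" where
  "dnumradA A T = Sup (insert 0 {sqrt ((cmod (innerA A (T z) z))\<^sup>2 + (normA A (T z)) ^ 4) | z. normA A z = 1})"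

end

theory Submission imports Defs begin


lemma scaleC_zero_right[simp]: "scaleC c (0::'a::complex_hilbert) = 0"
proof -
  have "scaleC c 0 + scaleC c 0 = scaleC c 0 + 0" using scaleC_add_right[of c 0 0] by simp
  thus ?thesis by (rule add_left_imp_eq)
qed
lemma scaleC_zero_left[simp]: "scaleC 0 (x::'a::complex_hilbert) = 0"
proof -
  have "scaleC 0 x + scaleC 0 x = scaleC 0 x + 0" using scaleC_add_left[of 0 0 x] by simp
  thus ?thesis by (rule add_left_imp_eq)
qed
lemma scaleC_minus1[simp]: "scaleC (-1) (x::'a::complex_hilbert) = - x"
proof -
  have "scaleC (-1) x = scaleR (-1) x" using scaleC_of_real[of "-1" x] by simp
  also have "\<dots> = - x" by (rule scaleR_minus1_left)
  finally show ?thesis .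
qed
lemma scaleC_minus_right: "scaleC c (- x) = - scaleC c x"
proof -
  have "scaleC c (- x) + scaleC c x = 0" using scaleC_add_right[of c "-x" x] by simp
  thus ?thesis by (simp add: eq_neg_iff_add_eq_0)
qed
lemma scaleC_diff_right: "scaleC c (x - y) = scaleC c x - scaleC c y"
  using scaleC_add_right[of c x "-y"] by (simp add: scaleC_minus_right)
lemma scaleC_minus_left: "scaleC (- c) x = - scaleC c x"
proof -
  have "scaleC (- c) x + scaleC c x = 0" using scaleC_add_left[of "-c" c x] by simp
  thus ?thesis by (simp add: eq_neg_iff_add_eq_0)
qed
lemma scaleC_diff_left: "scaleC (c - d) x = scaleC c x - scaleC d x"
  using scaleC_add_left[of c "-d" x] by (simp add: scaleC_minus_left)

lemma cinner_zero_left[simp]: "cinner 0 (y::'a::complex_hilbert) = 0"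
  using cinner_add_left[of 0 0 y] by simp
lemma cinner_zero_right[simp]: "cinner (x::'a::complex_hilbert) 0 = 0"
  using cinner_commute[of 0 x] by simp
lemma cinner_minus_left: "cinner (- x) y = - cinner x y"
  using cinner_add_left[of x "-x" y] by (simp add: add_eq_0_iff2)
lemma cinner_diff_left: "cinner (x - z) y = cinner x y - cinner z y"
  using cinner_add_left[of x "-z" y] by (simp add: cinner_minus_left)
lemma cinner_add_right: "cinner x (y + z) = cinner x y + cinner x z"
  by (metis cinner_commute cinner_add_left complex_cnj_add)
lemma cinner_scaleC_right: "cinner x (scaleC c y) = cnj c * cinner x y"
  by (metis cinner_commute cinner_scaleC_left complex_cnj_mult)
lemma cinner_minus_right: "cinner x (- y) = - cinner x y"
  by (metis cinner_commute cinner_minus_left complex_cnj_minus)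
lemma cinner_diff_right: "cinner x (y - z) = cinner x y - cinner x z"
  by (metis cinner_commute cinner_diff_left complex_cnj_diff)
lemma norm_sq_cinner: "(norm x)^2 = Re (cinner x x)"
  using norm_eq_sqrt_cinner[of x] cinner_self_nonneg[of x] by simp

definition herm :: "('a::complex_hilbert \<Rightarrow> 'a \<Rightarrow> complex) \<Rightarrow> bool" where
  "herm p \<longleftrightarrow> (\<forall>x y z. p (x+y) z = p x z + p y z) \<and> (\<forall>c x y. p (scaleC c x) y = c * p x y)
     \<and> (\<forall>x y. p y x = cnj (p x y)) \<and> (\<forall>x. 0 \<le> Re (p x x))"

definition qf :: "('a::complex_hilbert \<Rightarrow> 'a \<Rightarrow> complex) \<Rightarrow> 'a \<Rightarrow> real" where
  "qf p x = sqrt (Re (p x x))"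

lemma herm_addL: "herm p \<Longrightarrow> p (x+y) z = p x z + p y z" unfolding herm_def by blast
lemma herm_scaleL: "herm p \<Longrightarrow> p (scaleC c x) y = c * p x y" unfolding herm_def by blast
lemma herm_cnj: "herm p \<Longrightarrow> p y x = cnj (p x y)" unfolding herm_def by blast
lemma herm_nonneg: "herm p \<Longrightarrow> 0 \<le> Re (p x x)" unfolding herm_def by blast

lemma herm_zeroL[simp]: "herm p \<Longrightarrow> p 0 y = 0"
  using herm_addL[of p 0 0 y] by simp
lemma herm_zeroR[simp]: "herm p \<Longrightarrow> p y 0 = 0"
  using herm_cnj[of p 0 y] by simp
lemma herm_minusL: "herm p \<Longrightarrow> p (- x) y = - p x y"
  using herm_addL[of p x "-x" y] by (simp add: add_eq_0_iff2)
lemma herm_diffL: "herm p \<Longrightarrow> p (x - z) y = p x y - p z y"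
  using herm_addL[of p x "-z" y] by (simp add: herm_minusL)
lemma herm_swap: "herm p \<Longrightarrow> p x y = cnj (p y x)"
  using herm_cnj[of p y x] by simp
lemma herm_addR: "herm p \<Longrightarrow> p x (y + z) = p x y + p x z"
proof -
  assume h: "herm p"
  have "p x (y + z) = cnj (p (y+z) x)" by (rule herm_swap[OF h])
  also have "\<dots> = cnj (p y x) + cnj (p z x)" by (simp add: herm_addL[OF h])
  also have "\<dots> = p x y + p x z" by (simp add: herm_swap[OF h, of x y] herm_swap[OF h, of x z])
  finally show ?thesis .
qed
lemma herm_scaleR: "herm p \<Longrightarrow> p x (scaleC c y) = cnj c * p x y"
proof -
  assume h: "herm p"
  have "p x (scaleC c y) = cnj (p (scaleC c y) x)" by (rule herm_swap[OF h])
  also have "\<dots> = cnj c * cnj (p y x)" by (simp add: herm_scaleL[OF h])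
  also have "\<dots> = cnj c * p x y" by (simp add: herm_swap[OF h, of x y])
  finally show ?thesis .
qed
lemma herm_minusR: "herm p \<Longrightarrow> p x (- y) = - p x y"
  using herm_addR[of p x y "-y"] by (simp add: add_eq_0_iff2)
lemma herm_diffR: "herm p \<Longrightarrow> p x (y - z) = p x y - p x z"
  using herm_addR[of p x y "-z"] by (simp add: herm_minusR)
lemma herm_Im: "herm p \<Longrightarrow> Im (p x x) = 0"
proof -
  assume h: "herm p"
  have "Im (p x x) = Im (cnj (p x x))" using herm_cnj[OF h, of x x] by simp
  thus ?thesis by simp
qed
lemma herm_real: "herm p \<Longrightarrow> p x x = complex_of_real (Re (p x x))"
  using herm_Im[of p x] by (simp add: complex_eq_iff)

lemma qf_nonneg: "herm p \<Longrightarrow> 0 \<le> qf p x"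
  unfolding qf_def using herm_nonneg by auto
lemma qf_sq: "herm p \<Longrightarrow> (qf p x)^2 = Re (p x x)"
proof -
  assume h: "herm p"
  show ?thesis using herm_nonneg[OF h, of x] by (simp add: qf_def)
qed

lemma herm_expand:
  assumes "herm p"
  shows "Re (p (x - scaleC s y) (x - scaleC s y)) = Re (p x x) - 2 * Re (cnj s * p x y) + (cmod s)^2 * Re (p y y)"
proof -
  have "p (x - scaleC s y) (x - scaleC s y) = p x x - cnj s * p x y - s * p y x + s * cnj s * p y y"
    using assms by (simp add: herm_diffL herm_diffR herm_scaleL herm_scaleR algebra_simps)
  moreover have "p y x = cnj (p x y)" using assms by (rule herm_cnj)
  moreover have "Re (s * cnj s * p y y) = (cmod s)^2 * Re (p y y)"
  proof -
    have "s * cnj s * p y y = complex_of_real ((cmod s)^2 * Re (p y y))"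
    proof -
      have e: "s * cnj s = complex_of_real ((cmod s)^2)" using complex_norm_square[of s] by simp
      show ?thesis by (subst herm_real[OF assms, of y]) (simp only: e mult.assoc of_real_mult)
    qed
    thus ?thesis by (simp only: Re_complex_of_real)
  qed
  ultimately show ?thesis by simp
qed


lemma cnj_mult_self_Re: "Re (cnj (complex_of_real t * c) * c) = t * (cmod c)^2"
proof -
  have "Re (cnj (complex_of_real t * c) * c) = t * ((Re c)^2 + (Im c)^2)"
    by (simp add: power2_eq_square algebra_simps)
  thus ?thesis by (simp only: cmod_power2)
qed

lemma herm_CS:
  assumes h: "herm p"
  shows "cmod (p x y) \<le> qf p x * qf p y"
proof -
  define a where "a = Re (p x x)"
  define b where "b = Re (p y y)"
  define c where "c = p x y"
  have a0: "0 \<le> a" and b0: "0 \<le> b" using herm_nonneg[OF h] a_def b_def by auto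
  have key: "0 \<le> a - 2*t*(cmod c)^2 + t^2 * (cmod c)^2 * b" for t :: real
  proof -
    have "0 \<le> Re (p (x - scaleC (complex_of_real t * c) y) (x - scaleC (complex_of_real t * c) y))"
      by (rule herm_nonneg[OF h])
    also have "\<dots> = a - 2 * (t * (cmod c)^2) + (cmod (complex_of_real t * c))^2 * b"
      unfolding herm_expand[OF h] a_def b_def c_def cnj_mult_self_Re ..
    also have "\<dots> = a - 2*t*(cmod c)^2 + t^2 * (cmod c)^2 * b"
      by (simp add: norm_mult power_mult_distrib)
    finally show ?thesis .
  qed
  have "(cmod c)^2 \<le> a * b"
  proof (cases "b = 0")
    case True
    show ?thesis
    proof (rule ccontr)
      assume "\<not> ?thesis"
      hence cpos: "0 < (cmod c)^2" using True by simp
      have "0 \<le> a - 2*((a+1)/(2*(cmod c)^2))*(cmod c)^2" using key[of "(a+1)/(2*(cmod c)^2)"] True by simp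
      also have "\<dots> = -1" using cpos by (simp add: field_simps)
      finally show False by simp
    qed
  next
    case False
    hence bpos: "0 < b" using b0 by simp
    have "0 \<le> a - 2*(1/b)*(cmod c)^2 + (1/b)^2 * (cmod c)^2 * b" by (rule key)
    also have "\<dots> = a - (cmod c)^2 / b" using bpos by (simp add: field_simps power2_eq_square)
    finally have "(cmod c)^2 / b \<le> a" by simp
    thus ?thesis using bpos by (simp add: field_simps mult.commute)
  qed
  hence "sqrt ((cmod c)^2) \<le> sqrt (a * b)" by (rule real_sqrt_le_mono)
  thus ?thesis by (simp add: qf_def a_def b_def c_def real_sqrt_mult)
qed

lemma qf_eq_norm: "qf cinner x = norm x"
  by (simp add: qf_def norm_eq_sqrt_cinner)

lemma herm_cinner: "herm (cinner :: 'a::complex_hilbert \<Rightarrow> 'a \<Rightarrow> complex)"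
  unfolding herm_def using cinner_add_left cinner_scaleC_left cinner_commute cinner_self_nonneg by blast

lemma cinner_CS: "cmod (cinner x y) \<le> norm x * norm (y::'a::complex_hilbert)"
  using herm_CS[OF herm_cinner, of x y] by (simp add: qf_eq_norm)

lemma herm_qf_scale:
  assumes h: "herm p"
  shows "qf p (scaleC c x) = cmod c * qf p x"
proof -
  have "p (scaleC c x) (scaleC c x) = complex_of_real ((cmod c)^2) * p x x"
    using complex_norm_square[of c] by (simp add: herm_scaleL[OF h] herm_scaleR[OF h] mult.assoc)
  hence "Re (p (scaleC c x) (scaleC c x)) = (cmod c)^2 * Re (p x x)" by simp
  thus ?thesis by (simp add: qf_def real_sqrt_mult)
qed

lemma herm_qf_add:
  assumes h: "herm p"
  shows "qf p (x + y) \<le> qf p x + qf p y"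
proof -
  have "Re (p (x+y) (x+y)) = Re (p x x) + Re (p x y + p y x) + Re (p y y)"
    by (simp add: herm_addL[OF h] herm_addR[OF h])
  also have "Re (p x y + p y x) = 2 * Re (p x y)" by (simp add: herm_cnj[OF h, of x y])
  also have "Re (p x y) \<le> qf p x * qf p y"
    using herm_CS[OF h, of x y] complex_Re_le_cmod[of "p x y"] by linarith
  hence "Re (p x x) + 2 * Re (p x y) + Re (p y y) \<le> (qf p x)^2 + 2 * (qf p x * qf p y) + (qf p y)^2"
    by (simp add: qf_sq[OF h])
  also have "\<dots> = (qf p x + qf p y)^2" by (simp add: power2_eq_square algebra_simps)
  finally have "(qf p (x+y))^2 \<le> (qf p x + qf p y)^2" by (simp add: qf_sq[OF h])
  moreover have "0 \<le> qf p x + qf p y" using qf_nonneg[OF h, of x] qf_nonneg[OF h, of y] by simp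
  ultimately show ?thesis by (rule power2_le_imp_le)
qed

lemma herm_buzano:
  assumes h: "herm p" and e: "qf p e = 1"
  shows "cmod (p x e * p e y) \<le> 1/2 * (qf p x * qf p y + cmod (p x y))"
proof -
  define \<beta> where "\<beta> = p y e"
  define u where "u = y - scaleC (2 * \<beta>) e"
  have pee: "Re (p e e) = 1" using qf_sq[OF h, of e] e by simp
  have "p x u = p x y - 2 * p e y * p x e"
    unfolding u_def \<beta>_def by (simp add: herm_diffR[OF h] herm_scaleR[OF h] herm_swap[OF h, of e y])
  hence eq: "p x e * p e y = (p x y - p x u) / 2" by (simp add: field_simps)
  have "Re (p u u) = Re (p y y) - 2 * Re (cnj (2 * \<beta>) * p y e) + (cmod (2*\<beta>))^2 * Re (p e e)"
    unfolding u_def by (rule herm_expand[OF h])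
  also have "Re (cnj (2 * \<beta>) * p y e) = 2 * (cmod \<beta>)^2"
    using cnj_mult_self_Re[of 2 \<beta>] unfolding \<beta>_def by simp
  also have "(cmod (2*\<beta>))^2 = 4 * (cmod \<beta>)^2" by (simp add: norm_mult power_mult_distrib)
  finally have "Re (p u u) = Re (p y y)" using pee by simp
  hence qu: "qf p u = qf p y" by (simp add: qf_def)
  have "cmod (p x e * p e y) = cmod (p x y - p x u) / 2" by (simp add: eq norm_divide)
  also have "\<dots> \<le> (cmod (p x y) + cmod (p x u)) / 2" by (simp add: norm_triangle_ineq4)
  also have "\<dots> \<le> (cmod (p x y) + qf p x * qf p y) / 2" using herm_CS[OF h, of x u] qu by simp
  finally show ?thesis by simp
qed


lemma bop_add: "bounded_op T \<Longrightarrow> T (x + y) = T x + T y" unfolding bounded_op_def by blast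
lemma bop_scale: "bounded_op T \<Longrightarrow> T (scaleC c x) = scaleC c (T x)" unfolding bounded_op_def by blast
lemma bop_bound: "bounded_op T \<Longrightarrow> \<exists>M>0. \<forall>x. norm (T x) \<le> M * norm x"
proof -
  assume "bounded_op T"
  then obtain K where K: "\<forall>x. norm (T x) \<le> K * norm x" unfolding bounded_op_def by blast
  have "norm (T x) \<le> max K 1 * norm x" for x
    using K[rule_format, of x] mult_right_mono[of K "max K 1" "norm x"] by simp
  thus ?thesis by (intro exI[of _ "max K 1"]) auto
qed
lemma bop_zero[simp]: "bounded_op T \<Longrightarrow> T 0 = 0"
  using bop_add[of T 0 0] by simp
lemma bop_minus: "bounded_op T \<Longrightarrow> T (- x) = - T x"
  using bop_add[of T x "-x"] by (simp add: add_eq_0_iff2)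
lemma bop_diff: "bounded_op T \<Longrightarrow> T (x - y) = T x - T y"
  using bop_add[of T x "-y"] by (simp add: bop_minus)

lemma closed_kernel:
  fixes f :: "'a::real_normed_vector \<Rightarrow> 'b::real_normed_vector"
  assumes add: "\<And>x y. f (x + y) = f x + f y" and bd: "\<And>x. norm (f x) \<le> K * norm x"
  shows "closed {x. f x = 0}"
  unfolding closed_sequential_limits
proof (intro allI impI, elim conjE)
  fix X l assume X0: "\<forall>n. X n \<in> {x. f x = 0}" and lim: "X \<longlonglongrightarrow> l"
  have X: "\<forall>n. f (X n) = 0" using X0 by simp
  have diff: "f (a - b) = f a - f b" for a b using add[of "a - b" b] by (simp add: algebra_simps)
  have "(\<lambda>n. K * norm (X n - l)) \<longlonglongrightarrow> K * norm (l - l)"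
    by (intro tendsto_intros lim)
  hence t: "(\<lambda>n. K * norm (X n - l)) \<longlonglongrightarrow> 0" by simp
  have "norm (f l) \<le> K * norm (X n - l)" for n
  proof -
    have "norm (f l) = norm (f (X n - l))" using X diff[of "X n" l] by simp
    also have "\<dots> \<le> K * norm (X n - l)" by (rule bd)
    finally show ?thesis .
  qed
  hence ex: "\<exists>N. \<forall>n\<ge>N. norm (f l) \<le> K * norm (X n - l)" by (intro exI[of _ 0] allI impI)
  have "norm (f l) \<le> 0" using LIMSEQ_le_const[OF t ex] .
  thus "l \<in> {x. f x = 0}" by simp
qed

lemma parallelogram:
  fixes u v :: "'a::complex_hilbert"
  shows "(norm (u - v))^2 + (norm (u + v))^2 = 2 * (norm u)^2 + 2 * (norm v)^2"
proof -
  have h: "herm (cinner :: 'a \<Rightarrow> 'a \<Rightarrow> complex)" by (rule herm_cinner)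
  have "cinner (u - v) (u - v) + cinner (u + v) (u + v) = 2 * cinner u u + 2 * cinner v v"
    by (simp add: herm_diffL[OF h] herm_diffR[OF h] herm_addL[OF h] herm_addR[OF h])
  hence "Re (cinner (u - v) (u - v)) + Re (cinner (u + v) (u + v)) = 2 * Re (cinner u u) + 2 * Re (cinner v v)"
    by (metis plus_complex.sel(1) Re_complex_of_real mult_2 of_real_numeral)
  thus ?thesis by (simp add: norm_sq_cinner)
qed

lemma projection:
  fixes M :: "'a::complex_hilbert set"
  assumes cl: "closed M" and z: "0 \<in> M" and ad: "\<And>a b. a \<in> M \<Longrightarrow> b \<in> M \<Longrightarrow> a + b \<in> M"
    and sc: "\<And>c a. a \<in> M \<Longrightarrow> scaleC c a \<in> M"
  shows "\<exists>m\<in>M. \<forall>n\<in>M. cinner (x - m) n = 0"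
proof -
  have h: "herm (cinner :: 'a \<Rightarrow> 'a \<Rightarrow> complex)" by (rule herm_cinner)
  define D where "D = (\<lambda>m. norm (x - m)) ` M"
  define d where "d = Inf D"
  have Dne: "D \<noteq> {}" using z D_def by auto
  have Dbdd: "bdd_below D" unfolding D_def by (rule bdd_belowI[of _ 0]) auto
  have dle: "d \<le> norm (x - m)" if "m \<in> M" for m
    unfolding d_def D_def using Dbdd that by (intro cInf_lower) (auto simp: D_def)
  have d0: "0 \<le> d" unfolding d_def using Dne by (intro cInf_greatest) (auto simp: D_def)
  have "\<exists>m\<in>M. (norm (x - m))^2 < d^2 + 1 / (Suc k)" for k
  proof -
    have "d < sqrt (d^2 + 1 / Suc k)"
      using d0 real_sqrt_less_mono[of "d^2" "d^2 + 1 / Suc k"] by simp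
    then obtain r where "r \<in> D" "r < sqrt (d^2 + 1 / Suc k)" using cInf_lessD[OF Dne] d_def by blast
    then obtain m where m: "m \<in> M" "norm (x - m) < sqrt (d^2 + 1 / Suc k)" unfolding D_def by auto
    hence "(norm (x - m))^2 < (sqrt (d^2 + 1 / Suc k))^2"
      by (intro power_strict_mono) auto
    also have "\<dots> = d^2 + 1 / Suc k" by (simp add: add_nonneg_nonneg)
    finally show ?thesis using m by blast
  qed
  hence "\<forall>k. \<exists>m. m \<in> M \<and> (norm (x - m))^2 < d^2 + 1 / Suc k" by blast
  hence "\<exists>ms. \<forall>k. ms k \<in> M \<and> (norm (x - ms k))^2 < d^2 + 1 / Suc k" by (rule choice)
  then obtain ms where ms0: "\<forall>k. ms k \<in> M \<and> (norm (x - ms k))^2 < d^2 + 1 / Suc k" by blast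
  have ms: "\<And>k. ms k \<in> M" "\<And>k. (norm (x - ms k))^2 < d^2 + 1 / Suc k" using ms0 by auto
  have mid: "4 * d^2 \<le> (norm ((x - ms j) + (x - ms k)))^2" for j k
  proof -
    have mM: "scaleR (1/2) (ms j + ms k) \<in> M"
    proof -
      have "scaleR (1/2) (ms j + ms k) = scaleC (complex_of_real (1/2)) (ms j + ms k)" by (simp only: scaleC_of_real)
      thus ?thesis using sc[OF ad[OF ms(1) ms(1)], of "complex_of_real (1/2)" j k] by simp
    qed
    have eq: "(x - ms j) + (x - ms k) = scaleR 2 (x - scaleR (1/2) (ms j + ms k))"
      by (simp add: algebra_simps scaleR_2)
    have "2 * d \<le> 2 * norm (x - scaleR (1/2) (ms j + ms k))" using dle[OF mM] by simp
    also have "\<dots> = norm ((x - ms j) + (x - ms k))" by (simp add: eq)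
    finally have "2 * d \<le> norm ((x - ms j) + (x - ms k))" .
    hence "(2 * d)^2 \<le> (norm ((x - ms j) + (x - ms k)))^2" using d0 by (intro power_mono) auto
    thus ?thesis by (simp add: power_mult_distrib)
  qed
  have cauchy_bd: "(norm (ms k - ms j))^2 \<le> 2 / Suc j + 2 / Suc k" for j k
  proof -
    have "(norm ((x - ms j) - (x - ms k)))^2 + (norm ((x - ms j) + (x - ms k)))^2
        = 2 * (norm (x - ms j))^2 + 2 * (norm (x - ms k))^2" by (rule parallelogram)
    moreover have "(x - ms j) - (x - ms k) = ms k - ms j" by simp
    ultimately show ?thesis using mid[of j k] ms(2)[of j] ms(2)[of k] by simp
  qed
  have "Cauchy ms"
  proof (rule metric_CauchyI)
    fix e :: real assume e: "0 < e"
    obtain N :: nat where N: "4 / e^2 < N" using reals_Archimedean2 by blast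
    have "0 < 4 / e^2" using e by simp
    hence Npos: "0 < real N" using N by linarith
    have N4: "4 < N * e^2" using N e by (simp add: divide_less_eq)
    have "\<forall>j\<ge>N. \<forall>k\<ge>N. dist (ms j) (ms k) < e"
    proof (intro allI impI)
      fix j k assume j: "N \<le> j" and k: "N \<le> k"
      have "2 / Suc j \<le> 2 / N" using j Npos by (intro divide_left_mono) auto
      moreover have "2 / Suc k \<le> 2 / N" using k Npos by (intro divide_left_mono) auto
      ultimately have "(dist (ms j) (ms k))^2 \<le> 4 / N"
        using cauchy_bd[of k j] by (simp add: dist_norm norm_minus_commute)
      also have "4 / N < e^2" using N4 Npos by (simp add: divide_less_eq mult.commute)
      finally have "(dist (ms j) (ms k))^2 < e^2" .
      thus "dist (ms j) (ms k) < e" using e by (simp add: power_less_imp_less_base)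
    qed
    thus "\<exists>N. \<forall>m\<ge>N. \<forall>n\<ge>N. dist (ms m) (ms n) < e" by blast
  qed
  hence "convergent ms" by (simp add: Cauchy_convergent_iff)
  then obtain m where lim: "ms \<longlonglongrightarrow> m" unfolding convergent_def by blast
  have mM: "m \<in> M" by (rule closed_sequentially[OF cl ms(1) lim])
  have "(\<lambda>k. (norm (x - ms k))^2) \<longlonglongrightarrow> (norm (x - m))^2"
    by (intro tendsto_power tendsto_norm tendsto_diff tendsto_const lim)
  moreover have "(\<lambda>k. d^2 + 1 / real (Suc k)) \<longlonglongrightarrow> d^2"
    using LIMSEQ_inverse_real_of_nat_add[of "d^2"] by (simp add: inverse_eq_divide)
  moreover have "\<exists>N. \<forall>k\<ge>N. (norm (x - ms k))^2 \<le> d^2 + 1 / real (Suc k)"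
    by (intro exI[of _ 0] allI impI less_imp_le ms(2))
  ultimately have "(norm (x - m))^2 \<le> d^2 + 0"
    by (simp add: LIMSEQ_le)
  hence "(norm (x - m))^2 \<le> d^2" by simp
  hence dm: "norm (x - m) \<le> d" using d0 by (rule power2_le_imp_le)
  hence opt: "norm (x - m) \<le> norm ((x - m) - w)" if "w \<in> M" for w
  proof -
    have e: "norm (x - (m + w)) = norm ((x - m) - w)" by (simp add: algebra_simps)
    show ?thesis using dle[OF ad[OF mM that]] dm e by linarith
  qed
  have orth: "cinner (x - m) n = 0" if nM: "n \<in> M" for n
  proof (rule ccontr)
    define a where "a = cinner (x - m) n"
    define ca where "ca = (cmod a)^2"
    define nn where "nn = (norm n)^2"
    define t where "t = 1 / (nn + 1)"
    assume "cinner (x - m) n \<noteq> 0"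
    hence apos: "0 < ca" unfolding a_def ca_def by simp
    have nn0: "0 \<le> nn" unfolding nn_def by simp
    have tpos: "0 < t" unfolding t_def using nn0 by simp
    define w where "w = scaleC (complex_of_real t * a) n"
    have "Re (cinner ((x - m) - w) ((x - m) - w))
          = Re (cinner (x - m) (x - m)) - 2 * Re (cnj (complex_of_real t * a) * cinner (x - m) n)
            + (cmod (complex_of_real t * a))^2 * Re (cinner n n)"
      unfolding w_def by (rule herm_expand[OF h])
    also have "Re (cnj (complex_of_real t * a) * cinner (x - m) n) = t * ca"
      unfolding a_def ca_def by (rule cnj_mult_self_Re)
    also have "(cmod (complex_of_real t * a))^2 = t^2 * ca"
      unfolding ca_def by (simp add: norm_mult power_mult_distrib)
    finally have eqn: "(norm ((x - m) - w))^2 = (norm (x - m))^2 - 2 * (t * ca) + t^2 * ca * nn"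
      unfolding nn_def norm_sq_cinner by simp
    have "norm (x - m) \<le> norm ((x - m) - w)" unfolding w_def by (rule opt[OF sc[OF nM]])
    hence "(norm (x - m))^2 \<le> (norm ((x - m) - w))^2"
      by (intro power_mono) auto
    hence "2 * (t * ca) \<le> t^2 * ca * nn" using eqn by simp
    also have "t^2 * ca * nn = (t * ca) * (t * nn)" by (simp add: power2_eq_square mult_ac)
    finally have "(t * ca) * 2 \<le> (t * ca) * (t * nn)" by (simp add: mult_ac)
    hence "2 \<le> t * nn" using tpos apos by (simp add: mult_le_cancel_left_pos)
    moreover have "t * nn < 1" unfolding t_def using nn0 by simp
    ultimately show False by simp
  qed
  show ?thesis
  proof (rule bexI[of _ m])
    show "\<forall>n\<in>M. cinner (x - m) n = 0" using orth by simp
  qed (rule mM)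
qed


lemma riesz:
  fixes g :: "'a::complex_hilbert \<Rightarrow> complex"
  assumes add: "\<And>x y. g (x + y) = g x + g y" and sc: "\<And>c x. g (scaleC c x) = c * g x"
    and bd: "\<And>x. norm (g x) \<le> K * norm x"
  shows "\<exists>w. \<forall>x. g x = cinner x w"
proof (cases "\<forall>x. g x = 0")
  case True thus ?thesis by (intro exI[of _ 0]) simp
next
  case False
  then obtain x0 where gx0: "g x0 \<noteq> 0" by blast
  have g0: "g 0 = 0" using add[of 0 0] by simp
  have gdiff: "g (a - b) = g a - g b" for a b using add[of "a - b" b] by (simp add: algebra_simps)
  have cl: "closed {x. g x = 0}" by (rule closed_kernel[OF add bd])
  obtain m where m: "m \<in> {x. g x = 0}" and orth: "\<forall>n\<in>{x. g x = 0}. cinner (x0 - m) n = 0"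
    using projection[OF cl, of x0] g0 add sc by auto
  define e where "e = x0 - m"
  have ge: "g e = g x0" using m gdiff unfolding e_def by simp
  hence ge0: "g e \<noteq> 0" using gx0 by simp
  have "e \<noteq> 0" using ge0 g0 by auto
  hence ee: "cinner e e \<noteq> 0" using cinner_self_eq_0 by blast
  have eer: "cnj (cinner e e) = cinner e e" using cinner_commute[of e e] by simp
  define w where "w = scaleC (cnj (g e) / cinner e e) e"
  have "g x = cinner x w" for x
  proof -
    have "g (x - scaleC (g x / g e) e) = 0" using ge0 by (simp add: gdiff sc)
    hence "cinner e (x - scaleC (g x / g e) e) = 0" using orth unfolding e_def by simp
    hence "cinner (x - scaleC (g x / g e) e) e = 0" using cinner_commute[of "x - scaleC (g x / g e) e" e] by simp
    hence cx: "cinner x e = g x / g e * cinner e e" by (simp add: cinner_diff_left cinner_scaleC_left)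
    have "cinner x w = g e / cinner e e * cinner x e"
      unfolding w_def cinner_scaleC_right by (simp add: eer)
    also have "\<dots> = g x" using cx ee ge0 by simp
    finally show ?thesis by simp
  qed
  thus ?thesis by blast
qed

lemma adj_prop:
  fixes S :: "'a::complex_hilbert \<Rightarrow> 'a"
  assumes "bounded_op S"
  shows "cinner (S x) y = cinner x (adj S y)"
proof -
  obtain K where K: "\<forall>x. norm (S x) \<le> K * norm x" using bop_bound[OF assms] by blast
  have ex: "\<exists>w. \<forall>x. cinner (S x) y = cinner x w" for y
  proof (rule riesz)
    fix x z show "cinner (S (x + z)) y = cinner (S x) y + cinner (S z) y"
      by (simp add: bop_add[OF assms] cinner_add_left)
  next
    fix c x show "cinner (S (scaleC c x)) y = c * cinner (S x) y"
      by (simp add: bop_scale[OF assms] cinner_scaleC_left)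
  next
    fix x
    have "norm (cinner (S x) y) \<le> norm (S x) * norm y" by (rule cinner_CS)
    also have "\<dots> \<le> K * norm x * norm y" using K by (simp add: mult_right_mono)
    finally show "norm (cinner (S x) y) \<le> (K * norm y) * norm x" by (simp add: mult_ac)
  qed
  define T where "T = (\<lambda>y. SOME w. \<forall>x. cinner (S x) y = cinner x w)"
  have PT: "\<forall>x y. cinner (S x) y = cinner x (T y)"
    unfolding T_def using someI_ex[OF ex] by blast
  have uniq: "T' = T" if P: "\<forall>x y. cinner (S x) y = cinner x (T' y)" for T'
  proof
    fix y
    have "cinner (T' y - T y) (T' y - T y) = 0"
      using P PT by (simp add: cinner_diff_right)
    thus "T' y = T y" using cinner_self_eq_0[of "T' y - T y"] by simp
  qed
  have "\<forall>x y. cinner (S x) y = cinner x (adj S y)"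
    unfolding adj_def
    by (rule theI[where P="\<lambda>T. \<forall>x y. cinner (S x) y = cinner x (T y)", OF PT uniq])
  thus ?thesis by blast
qed

lemma pos_herm:
  assumes A: "positive_op A"
  shows "herm (\<lambda>x y. cinner (A x) y)"
proof -
  have bA: "bounded_op A" using A unfolding positive_op_def by blast
  have im: "Im (cinner (A x) x) = 0" and re: "0 \<le> Re (cinner (A x) x)" for x
    using A unfolding positive_op_def by auto
  have hc: "herm (cinner :: 'a \<Rightarrow> 'a \<Rightarrow> complex)" by (rule herm_cinner)
  have hermit: "cinner (A y) x = cnj (cinner (A x) y)" for x y
  proof -
    define a where "a = cinner (A x) y"
    define b where "b = cinner (A y) x"
    have "cinner (A (x + y)) (x + y) = cinner (A x) x + a + b + cinner (A y) y"
      unfolding a_def b_def by (simp add: bop_add[OF bA] herm_addL[OF hc] herm_addR[OF hc])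
    hence i1: "Im (a + b) = 0" using im[of "x+y"] im[of x] im[of y] by simp
    have "cinner (A (x + scaleC \<i> y)) (x + scaleC \<i> y) = cinner (A x + scaleC \<i> (A y)) (x + scaleC \<i> y)"
      by (simp only: bop_add[OF bA] bop_scale[OF bA])
    also have "\<dots> = cinner (A x) x + cinner (A x) (scaleC \<i> y) + (cinner (scaleC \<i> (A y)) x + cinner (scaleC \<i> (A y)) (scaleC \<i> y))"
      by (simp only: herm_addL[OF hc] herm_addR[OF hc] add_ac)
    also have "\<dots> = cinner (A x) x + (- \<i>) * a + (\<i> * b + (- \<i>) * (\<i> * cinner (A y) y))"
      unfolding a_def b_def by (simp only: herm_scaleL[OF hc] herm_scaleR[OF hc] complex_cnj_i)
    also have "\<dots> = cinner (A x) x - \<i> * a + \<i> * b + cinner (A y) y"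
      by simp
    finally have "cinner (A (x + scaleC \<i> y)) (x + scaleC \<i> y) = cinner (A x) x - \<i> * a + \<i> * b + cinner (A y) y" .
    hence i2: "Re (b - a) = 0" using im[of "x + scaleC \<i> y"] im[of x] im[of y] by simp
    show ?thesis unfolding a_def[symmetric] b_def[symmetric] using i1 i2
      by (simp add: complex_eq_iff)
  qed
  show ?thesis unfolding herm_def
  proof (intro conjI allI)
    fix x y z show "cinner (A (x + y)) z = cinner (A x) z + cinner (A y) z"
      by (simp only: bop_add[OF bA] cinner_add_left)
  next
    fix c x y show "cinner (A (scaleC c x)) y = c * cinner (A x) y"
      by (simp only: bop_scale[OF bA] cinner_scaleC_left)
  next
    fix x y show "cinner (A y) x = cnj (cinner (A x) y)" by (rule hermit)
  next
    fix x show "0 \<le> Re (cinner (A x) x)" by (rule re)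
  qed
qed

lemma mp_inverse_prop:
  fixes A :: "'a::complex_hilbert \<Rightarrow> 'a"
  assumes A: "positive_op A"
  shows "A (mp_inverse A (A v)) = A v"
proof -
  have bA: "bounded_op A" using A unfolding positive_op_def by blast
  have hA: "herm (\<lambda>x y. cinner (A x) y)" by (rule pos_herm[OF A])
  obtain K where K: "\<forall>x. norm (A x) \<le> K * norm x" using bop_bound[OF bA] by blast
  have cl: "closed {x. A x = 0}" by (rule closed_kernel[of A K]) (use bop_add[OF bA] K in auto)
  obtain m where m: "m \<in> {x. A x = 0}" and orth: "\<forall>n\<in>{x. A x = 0}. cinner (v - m) n = 0"
    using projection[OF cl, of v] bop_add[OF bA] bop_scale[OF bA] bop_zero[OF bA] by auto
  define x0 where "x0 = v - m"
  have Ax0: "A x0 = A v" using m unfolding x0_def by (simp add: bop_diff[OF bA])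
  define P where "P = (\<lambda>x. (\<forall>n. A n = 0 \<longrightarrow> cinner x n = 0) \<and> (\<forall>z. cinner (A x - A v) (A z) = 0))"
  have Px0: "P x0" unfolding P_def x0_def using orth Ax0 x0_def by simp
  have uniq: "x1 = x0" if P1: "P x1" for x1
  proof -
    have "cinner (A x1 - A v) (A (x1 - x0)) = 0" using P1 unfolding P_def by blast
    hence "cinner (A (x1 - x0)) (A (x1 - x0)) = 0" using Ax0 by (simp add: bop_diff[OF bA])
    hence k: "A (x1 - x0) = 0" using cinner_self_eq_0 by blast
    have "cinner x1 (x1 - x0) = 0" using P1 k unfolding P_def by blast
    moreover have "cinner x0 (x1 - x0) = 0" using Px0 k unfolding P_def by blast
    ultimately have "cinner (x1 - x0) (x1 - x0) = 0" by (simp add: cinner_diff_left)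
    thus ?thesis using cinner_self_eq_0[of "x1 - x0"] by simp
  qed
  have "mp_inverse A (A v) = x0"
    unfolding mp_inverse_def using the_equality[of P x0, OF Px0 uniq] unfolding P_def by simp
  thus ?thesis using Ax0 by simp
qed


lemma iter_bound:
  fixes a :: "nat \<Rightarrow> real" and n M C :: real
  assumes n: "0 < n" and M: "0 < M" and a0: "\<And>k. 0 \<le> a k"
    and step: "\<And>k. (a k)^2 \<le> a (Suc k) * n" and up: "\<And>k. a k \<le> C * M^(2^k)"
  shows "a 0 \<le> M * n"
proof -
  have inv: "a 0 ^ (2^k) * n \<le> a k * n^(2^k)" for k
  proof (induction k)
    case 0 thus ?case by simp
  next
    case (Suc k)
    have "(a 0 ^ (2^k) * n)^2 \<le> (a k * n^(2^k))^2"
      using Suc a0 n by (intro power_mono) auto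
    hence "a 0 ^ (2^Suc k) * n^2 \<le> (a k)^2 * n^(2^Suc k)"
      by (simp add: power_mult_distrib power_mult[symmetric] mult.commute)
    also have "\<dots> \<le> a (Suc k) * n * n^(2^Suc k)"
      using step[of k] n by (intro mult_right_mono) auto
    finally have "n * (a 0 ^ (2^Suc k) * n) \<le> n * (a (Suc k) * n^(2^Suc k))"
      by (simp add: power2_eq_square mult_ac)
    thus ?case using n by (simp add: mult_le_cancel_left_pos)
  qed
  show ?thesis
  proof (rule ccontr)
    assume "\<not> ?thesis"
    hence gt: "M * n < a 0" by simp
    define q where "q = a 0 / (M * n)"
    have Mn: "0 < M * n" using M n by simp
    have q1: "1 < q" unfolding q_def using gt Mn by simp
    have qk: "q^(2^k) * n \<le> C" for k
    proof -
      have e: "a 0 ^ (2^k) = q^(2^k) * (M * n)^(2^k)" unfolding q_def using M n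
        by (simp add: power_divide)
      have "q^(2^k) * n * (M * n)^(2^k) = a 0 ^ (2^k) * n" by (simp add: e mult_ac)
      also have "\<dots> \<le> a k * n^(2^k)" by (rule inv)
      also have "\<dots> \<le> C * M^(2^k) * n^(2^k)" using up[of k] n by (intro mult_right_mono) auto
      also have "\<dots> = C * (M * n)^(2^k)" by (simp add: power_mult_distrib)
      finally show ?thesis using Mn by simp
    qed
    obtain k where k: "C / n < q^k" using real_arch_pow[OF q1] by blast
    have "q^k \<le> q^(2^k)" using q1 by (intro power_increasing) (auto intro: less_imp_le less_exp)
    hence "C / n < q^(2^k)" using k by simp
    hence "C < q^(2^k) * n" using n by (simp add: divide_less_eq)
    thus False using qk[of k] by simp
  qed
qed


lemma A_selfadj:
  assumes A: "positive_op A"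
  shows "cinner (A u) w = cinner u (A w)"
proof -
  have "cinner (A u) w = cnj (cinner (A w) u)" by (rule herm_swap[OF pos_herm[OF A]])
  also have "\<dots> = cinner u (A w)" using cinner_commute[of u "A w"] by simp
  finally show ?thesis .
qed

lemma normA_qf: "normA A z = qf (\<lambda>x y. cinner (A x) y) z"
  by (simp add: normA_def qf_def)

lemma BA_D: "S \<in> BA A \<Longrightarrow> bounded_op S \<and> (\<exists>R. bounded_op R \<and> (\<forall>x. A (R x) = adj S (A x)))"
  by (simp add: BA_def)

lemma sharp_A:
  assumes A: "positive_op A" and S: "S \<in> BA A"
  shows "A (sharpA A S v) = adj S (A v)"
proof -
  obtain R where R: "bounded_op R" "\<forall>x. A (R x) = adj S (A x)" using BA_D[OF S] by blast
  have "A (sharpA A S v) = A (mp_inverse A (A (R v)))" unfolding sharpA_def using R by simp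
  also have "\<dots> = A (R v)" by (rule mp_inverse_prop[OF A])
  finally show ?thesis using R by simp
qed

lemma sharp_prop:
  assumes A: "positive_op A" and S: "S \<in> BA A"
  shows "cinner (A (S u)) v = cinner (A u) (sharpA A S v)"
proof -
  have bS: "bounded_op S" using BA_D[OF S] by blast
  have "cinner (A (S u)) v = cinner (S u) (A v)" by (rule A_selfadj[OF A])
  also have "\<dots> = cinner u (adj S (A v))" by (rule adj_prop[OF bS])
  also have "\<dots> = cinner u (A (sharpA A S v))" by (simp add: sharp_A[OF A S])
  also have "\<dots> = cinner (A u) (sharpA A S v)" by (rule A_selfadj[OF A, symmetric])
  finally show ?thesis .
qed

lemma normA_le_norm:
  assumes A: "positive_op A"
  shows "\<exists>KA>0. \<forall>w. normA A w \<le> KA * norm w"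
proof -
  have bA: "bounded_op A" using A unfolding positive_op_def by blast
  obtain K where K: "K > 0" "\<forall>x. norm (A x) \<le> K * norm x" using bop_bound[OF bA] by blast
  have "normA A w \<le> sqrt K * norm w" for w
  proof -
    have "Re (cinner (A w) w) \<le> cmod (cinner (A w) w)" by (rule complex_Re_le_cmod)
    also have "\<dots> \<le> norm (A w) * norm w" by (rule cinner_CS)
    also have "\<dots> \<le> K * norm w * norm w" using K by (simp add: mult_right_mono)
    also have "K * norm w * norm w = K * (norm w)^2" by (simp add: power2_eq_square)
    also have "\<dots> = (sqrt K * norm w)^2" using K by (simp add: power_mult_distrib)
    finally have "Re (cinner (A w) w) \<le> (sqrt K * norm w)^2" .
    hence "sqrt (Re (cinner (A w) w)) \<le> sqrt ((sqrt K * norm w)^2)" by (rule real_sqrt_le_mono)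
    thus ?thesis using K by (simp add: normA_def)
  qed
  thus ?thesis using K by (intro exI[of _ "sqrt K"]) auto
qed

lemma S_Abound:
  assumes A: "positive_op A" and S: "S \<in> BA A"
  shows "\<exists>c\<ge>0. \<forall>z. normA A (S z) \<le> c * normA A z"
proof -
  define p where "p = (\<lambda>x y. cinner (A x) y)"
  have hp: "herm p" unfolding p_def by (rule pos_herm[OF A])
  have N: "normA A z = qf p z" for z unfolding p_def by (rule normA_qf)
  have bS: "bounded_op S" using BA_D[OF S] by blast
  obtain R where R: "bounded_op R" "\<forall>x. A (R x) = adj S (A x)" using BA_D[OF S] by blast
  obtain MS where MS: "MS > 0" "\<forall>x. norm (S x) \<le> MS * norm x" using bop_bound[OF bS] by blast
  obtain MR where MR: "MR > 0" "\<forall>x. norm (R x) \<le> MR * norm x" using bop_bound[OF R(1)] by blast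
  obtain KA where KA: "KA > 0" "\<forall>w. normA A w \<le> KA * norm w" using normA_le_norm[OF A] by blast
  define T where "T = (\<lambda>x. R (S x))"
  define M where "M = MR * MS"
  have Mpos: "0 < M" unfolding M_def using MR MS by simp
  have Tn: "norm (T x) \<le> M * norm x" for x
  proof -
    have "norm (T x) \<le> MR * norm (S x)" unfolding T_def using MR by blast
    also have "\<dots> \<le> MR * (MS * norm x)" using MR MS by (intro mult_left_mono) auto
    finally show ?thesis by (simp add: M_def mult_ac)
  qed
  have TS: "p (T u) v = p (S u) (S v)" for u v
  proof -
    have "p (T u) v = cinner (adj S (A (S u))) v" unfolding p_def T_def using R by simp
    also have "\<dots> = cnj (cinner v (adj S (A (S u))))" by (rule cinner_commute)
    also have "\<dots> = cnj (cinner (S v) (A (S u)))" by (simp add: adj_prop[OF bS])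
    also have "\<dots> = p (S u) (S v)" unfolding p_def using cinner_commute[of "A (S u)" "S v"] by simp
    finally show ?thesis .
  qed
  have Tsym: "p (T u) v = p u (T v)" for u v
  proof -
    have "p u (T v) = cnj (p (T v) u)" by (rule herm_swap[OF hp])
    also have "\<dots> = cnj (p (S v) (S u))" by (simp add: TS)
    also have "\<dots> = p (S u) (S v)" by (simp add: herm_swap[OF hp, of "S u" "S v"])
    finally show ?thesis by (simp add: TS)
  qed
  have Tpow: "p ((T^^m) u) v = p u ((T^^m) v)" for m u v
  proof (induction m arbitrary: u v)
    case 0 thus ?case by simp
  next
    case (Suc m)
    have "p ((T^^Suc m) u) v = p (T ((T^^m) u)) v" by simp
    also have "\<dots> = p ((T^^m) u) (T v)" by (rule Tsym)
    also have "\<dots> = p u ((T^^m) (T v))" by (rule Suc.IH)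
    also have "(T^^m) (T v) = (T^^Suc m) v" by (simp add: funpow_swap1)
    finally show ?case .
  qed
  have Tpown: "norm ((T^^m) x) \<le> M^m * norm x" for m x
  proof (induction m)
    case 0 thus ?case by simp
  next
    case (Suc m)
    have "norm ((T^^Suc m) x) = norm (T ((T^^m) x))" by simp
    also have "\<dots> \<le> M * norm ((T^^m) x)" by (rule Tn)
    also have "\<dots> \<le> M * (M^m * norm x)" using Suc Mpos by (intro mult_left_mono) auto
    finally show ?case by (simp add: mult_ac)
  qed
  have step: "(qf p ((T^^m) w))^2 \<le> qf p ((T^^(m+m)) w) * qf p w" for m w
  proof -
    have "(qf p ((T^^m) w))^2 = Re (p ((T^^m) w) ((T^^m) w))" by (rule qf_sq[OF hp])
    also have "\<dots> = Re (p ((T^^m) ((T^^m) w)) w)" by (simp add: Tpow)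
    also have "(T^^m) ((T^^m) w) = (T^^(m+m)) w" by (simp add: funpow_add)
    also have "Re (p ((T^^(m+m)) w) w) \<le> cmod (p ((T^^(m+m)) w) w)" by (rule complex_Re_le_cmod)
    also have "\<dots> \<le> qf p ((T^^(m+m)) w) * qf p w" by (rule herm_CS[OF hp])
    finally show ?thesis .
  qed
  have TzB: "qf p (T z) \<le> M * qf p z" for z
  proof (cases "qf p z = 0")
    case True
    have "(qf p ((T^^1) z))^2 \<le> qf p ((T^^(1+1)) z) * qf p z" by (rule step)
    hence "(qf p (T z))^2 \<le> 0" using True by simp
    hence "qf p (T z) = 0" using qf_nonneg[OF hp, of "T z"] by simp
    thus ?thesis using True by simp
  next
    case False
    hence npos: "0 < qf p z" using qf_nonneg[OF hp, of z] by simp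
    define a where "a = (\<lambda>k. qf p ((T^^(2^k)) z))"
    have "a 0 \<le> M * qf p z"
    proof (rule iter_bound[OF npos Mpos])
      fix k show "0 \<le> a k" unfolding a_def by (rule qf_nonneg[OF hp])
    next
      fix k show "(a k)^2 \<le> a (Suc k) * qf p z"
        unfolding a_def using step[of "2^k" z] by (simp add: mult_2)
    next
      fix k
      have "a k = normA A ((T^^(2^k)) z)" unfolding a_def by (simp add: N)
      also have "\<dots> \<le> KA * norm ((T^^(2^k)) z)" using KA by blast
      also have "\<dots> \<le> KA * (M^(2^k) * norm z)" using KA by (intro mult_left_mono Tpown) auto
      finally show "a k \<le> (KA * norm z) * M^(2^k)" by (simp add: mult_ac)
    qed
    thus ?thesis unfolding a_def by simp
  qed
  have "normA A (S z) \<le> sqrt M * normA A z" for z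
  proof -
    have "(qf p (S z))^2 = Re (p (S z) (S z))" by (rule qf_sq[OF hp])
    also have "\<dots> = Re (p (T z) z)" by (simp add: TS)
    also have "\<dots> \<le> cmod (p (T z) z)" by (rule complex_Re_le_cmod)
    also have "\<dots> \<le> qf p (T z) * qf p z" by (rule herm_CS[OF hp])
    also have "\<dots> \<le> M * qf p z * qf p z" using TzB[of z] qf_nonneg[OF hp, of z] by (intro mult_right_mono) auto
    also have "M * qf p z * qf p z = M * (qf p z)^2" by (simp add: power2_eq_square)
    also have "\<dots> = (sqrt M * qf p z)^2" using Mpos by (simp add: power_mult_distrib)
    finally have "(qf p (S z))^2 \<le> (sqrt M * qf p z)^2" .
    moreover have "0 \<le> sqrt M * qf p z" using qf_nonneg[OF hp, of z] Mpos by simp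
    ultimately have "qf p (S z) \<le> sqrt M * qf p z" by (rule power2_le_imp_le)
    thus ?thesis by (simp add: N)
  qed
  thus ?thesis using Mpos by (intro exI[of _ "sqrt M"]) auto
qed

lemma J_Abound:
  assumes A: "positive_op A" and S: "S \<in> BA A"
  shows "\<exists>c\<ge>0. \<forall>z. normA A (sharpA A S z) \<le> c * normA A z"
proof -
  define p where "p = (\<lambda>x y. cinner (A x) y)"
  have hp: "herm p" unfolding p_def by (rule pos_herm[OF A])
  have N: "normA A z = qf p z" for z unfolding p_def by (rule normA_qf)
  obtain c where c: "c \<ge> 0" "\<forall>z. normA A (S z) \<le> c * normA A z" using S_Abound[OF A S] by blast
  have "qf p (sharpA A S z) \<le> c * qf p z" for z
  proof -
    define j where "j = sharpA A S z"
    have "(qf p j)^2 = Re (p j j)" by (rule qf_sq[OF hp])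
    also have "p j j = p (S j) z" unfolding p_def j_def by (rule sharp_prop[OF A S, symmetric])
    also have "Re (p (S j) z) \<le> cmod (p (S j) z)" by (rule complex_Re_le_cmod)
    also have "\<dots> \<le> qf p (S j) * qf p z" by (rule herm_CS[OF hp])
    also have "\<dots> \<le> c * qf p j * qf p z" using c N qf_nonneg[OF hp, of z] by (intro mult_right_mono) auto
    finally have ineq: "qf p j * qf p j \<le> qf p j * (c * qf p z)" by (simp add: power2_eq_square mult_ac)
    show ?thesis
    proof (cases "qf p j = 0")
      case True thus ?thesis using c qf_nonneg[OF hp, of z] unfolding j_def by simp
    next
      case False
      hence "0 < qf p j" using qf_nonneg[OF hp, of j] by simp
      thus ?thesis using ineq unfolding j_def by (simp add: mult_le_cancel_left_pos)
    qed
  qed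
  thus ?thesis using c by (intro exI[of _ c]) (auto simp: N)
qed


lemma key_pointwise:
  assumes hp: "herm p" and K1: "\<And>u v. p (S u) v = p u (J v)" and z: "qf p z = 1"
  shows "(cmod (p (S z) z))^2 + (qf p (S z))^4
    \<le> 1/4 * qf p (J (S z) + S (J z) + scaleC 4 (J (S (J (S z))))) + 1/2 * cmod (p (S (S z)) z)"
proof -
  define a where "a = p (S z) z"
  define w where "w = J (S z)"
  have qn: "0 \<le> qf p x" for x by (rule qf_nonneg[OF hp])
  have A: "p z (J z) = a" unfolding a_def by (rule K1[symmetric])
  have B0: "cmod (p (S z) z * p z (J z)) \<le> 1/2 * (qf p (S z) * qf p (J z) + cmod (p (S z) (J z)))"
    by (rule herm_buzano[OF hp z])
  have "p (S z) (J z) = p (S (S z)) z" by (rule K1[symmetric])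
  hence B: "(cmod a)^2 \<le> 1/2 * (qf p (S z) * qf p (J z) + cmod (p (S (S z)) z))"
    using B0 A unfolding a_def by (simp add: norm_mult power2_eq_square)
  have C: "qf p (S z) * qf p (J z) \<le> ((qf p (S z))^2 + (qf p (J z))^2) / 2"
    using sum_squares_bound[of "qf p (S z)" "qf p (J z)"] by simp
  have "(qf p (S z))^2 = Re (p (S z) (S z))" by (rule qf_sq[OF hp])
  also have "p (S z) (S z) = p z w" unfolding w_def by (rule K1)
  also have "Re (p z w) \<le> cmod (p z w)" by (rule complex_Re_le_cmod)
  also have "\<dots> \<le> qf p z * qf p w" by (rule herm_CS[OF hp])
  finally have "(qf p (S z))^2 \<le> qf p w" using z by simp
  hence "((qf p (S z))^2)^2 \<le> (qf p w)^2" using qn by (intro power_mono) auto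
  hence D: "(qf p (S z))^4 \<le> (qf p w)^2" by (simp add: power_mult[symmetric])
  have E1: "Re (p (J (S z)) z) = (qf p (S z))^2"
  proof -
    have "p (J (S z)) z = cnj (p z (J (S z)))" by (rule herm_swap[OF hp])
    also have "p z (J (S z)) = p (S z) (S z)" by (rule K1[symmetric])
    finally show ?thesis by (simp add: qf_sq[OF hp])
  qed
  have E2: "Re (p (S (J z)) z) = (qf p (J z))^2"
    using K1[of "J z" z] by (simp add: qf_sq[OF hp])
  have E3: "Re (p (J (S w)) z) = (qf p w)^2"
  proof -
    have "p (J (S w)) z = cnj (p z (J (S w)))" by (rule herm_swap[OF hp])
    also have "p z (J (S w)) = p (S z) (S w)" by (rule K1[symmetric])
    also have "\<dots> = cnj (p (S w) (S z))" by (rule herm_swap[OF hp])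
    also have "p (S w) (S z) = p w (J (S z))" by (rule K1)
    finally have "p (J (S w)) z = p w w" unfolding w_def by simp
    thus ?thesis by (simp add: qf_sq[OF hp])
  qed
  define P where "P = J (S z) + S (J z) + scaleC 4 (J (S (J (S z))))"
  have "p P z = p (J (S z)) z + p (S (J z)) z + 4 * p (J (S w)) z"
    unfolding P_def w_def by (simp add: herm_addL[OF hp] herm_scaleL[OF hp])
  hence "Re (p P z) = (qf p (S z))^2 + (qf p (J z))^2 + 4 * (qf p w)^2"
    using E1 E2 E3 by simp
  moreover have "Re (p P z) \<le> qf p P"
  proof -
    have "Re (p P z) \<le> cmod (p P z)" by (rule complex_Re_le_cmod)
    also have "\<dots> \<le> qf p P * qf p z" by (rule herm_CS[OF hp])
    finally show ?thesis using z by simp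
  qed
  ultimately have "(qf p (S z))^2 + (qf p (J z))^2 + 4 * (qf p w)^2 \<le> qf p P" by simp
  thus ?thesis using B C D unfolding P_def a_def by simp
qed


theorem corollary2p22:
  fixes A S :: "'a::complex_hilbert \<Rightarrow> 'a"
  assumes "positive_op A"
    and "S \<in> BA A"
  shows "(dnumradA A S)\<^sup>2 \<le>
    1/4 * opnormA A (\<lambda>x. sharpA A S (S x) + S (sharpA A S x)
                          + scaleC 4 (sharpA A S (S (sharpA A S (S x)))))
    + 1/2 * numradA A (\<lambda>x. S (S x))"
proof -
  note A = assms(1) and SB = assms(2)
  define p where "p = (\<lambda>x y. cinner (A x) y)"
  have hp: "herm p" unfolding p_def by (rule pos_herm[OF A])
  have N: "normA A z = qf p z" for z unfolding p_def by (rule normA_qf)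
  have I: "innerA A x z = p x z" for x z unfolding p_def innerA_def ..
  define J where "J = sharpA A S"
  have K1: "p (S u) v = p u (J v)" for u v unfolding p_def J_def by (rule sharp_prop[OF A SB])
  obtain cS where cS: "cS \<ge> 0" "\<And>z. qf p (S z) \<le> cS * qf p z" using S_Abound[OF A SB] N by metis
  obtain cJ where cJ: "cJ \<ge> 0" "\<And>z. qf p (J z) \<le> cJ * qf p z" using J_Abound[OF A SB] N J_def by metis
  have qn: "0 \<le> qf p x" for x by (rule qf_nonneg[OF hp])
  define P where "P = (\<lambda>x. J (S x) + S (J x) + scaleC 4 (J (S (J (S x)))))"
  define SS where "SS = (\<lambda>x. S (S x))"
  define cP where "cP = cJ * cS + cS * cJ + 4 * (cJ * (cS * (cJ * cS)))"
  have cP0: "0 \<le> cP" unfolding cP_def using cS cJ by simp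
  have JS: "qf p (J (S x)) \<le> cJ * cS * qf p x" for x
  proof -
    have "qf p (J (S x)) \<le> cJ * qf p (S x)" by (rule cJ(2))
    also have "\<dots> \<le> cJ * (cS * qf p x)" using cJ cS by (intro mult_left_mono) auto
    finally show ?thesis by (simp add: mult_ac)
  qed
  have SJ: "qf p (S (J x)) \<le> cJ * cS * qf p x" for x
  proof -
    have "qf p (S (J x)) \<le> cS * qf p (J x)" by (rule cS(2))
    also have "\<dots> \<le> cS * (cJ * qf p x)" using cJ cS by (intro mult_left_mono) auto
    finally show ?thesis by (simp add: mult_ac)
  qed
  have SSb: "qf p (S (S x)) \<le> cS * cS * qf p x" for x
  proof -
    have "qf p (S (S x)) \<le> cS * qf p (S x)" by (rule cS(2))
    also have "\<dots> \<le> cS * (cS * qf p x)" using cS by (intro mult_left_mono) auto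
    finally show ?thesis by (simp add: mult_ac)
  qed
  have Pb: "qf p (P x) \<le> cP * qf p x" for x
  proof -
    have "qf p (P x) \<le> qf p (J (S x) + S (J x)) + qf p (scaleC 4 (J (S (J (S x)))))"
      unfolding P_def by (rule herm_qf_add[OF hp])
    also have "\<dots> \<le> (qf p (J (S x)) + qf p (S (J x))) + 4 * qf p (J (S (J (S x))))"
      using herm_qf_add[OF hp, of "J (S x)" "S (J x)"] by (simp add: herm_qf_scale[OF hp])
    also have "\<dots> \<le> (cJ * cS * qf p x + cJ * cS * qf p x) + 4 * (cJ * cS * (cJ * cS * qf p x))"
    proof -
      have "qf p (J (S (J (S x)))) \<le> cJ * cS * qf p (J (S x))" by (rule JS)
      also have "\<dots> \<le> cJ * cS * (cJ * cS * qf p x)" using JS[of x] cJ cS by (intro mult_left_mono) auto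
      finally have h: "qf p (J (S (J (S x)))) \<le> cJ * cS * (cJ * cS * qf p x)" .
      show ?thesis using JS[of x] SJ[of x] h by linarith
    qed
    also have "\<dots> = cP * qf p x" unfolding cP_def by (simp add: algebra_simps)
    finally show ?thesis .
  qed
  define OPS where "OPS = insert 0 {normA A (P z) | z. normA A z = 1}"
  define NRS where "NRS = insert 0 {cmod (innerA A (SS z) z) | z. normA A z = 1}"
  have opd: "opnormA A P = Sup OPS" unfolding opnormA_def OPS_def ..
  have nrd: "numradA A SS = Sup NRS" unfolding numradA_def NRS_def ..
  have OPbdd: "bdd_above OPS"
  proof (rule bdd_aboveI[of _ cP])
    fix y assume "y \<in> OPS"
    then consider "y = 0" | z where "y = normA A (P z)" "normA A z = 1" unfolding OPS_def by blast
    thus "y \<le> cP"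
    proof cases
      case 1 thus ?thesis using cP0 by simp
    next
      case 2 thus ?thesis using Pb[of z] by (simp add: N)
    qed
  qed
  have NRbdd: "bdd_above NRS"
  proof (rule bdd_aboveI[of _ "cS * cS"])
    fix y assume "y \<in> NRS"
    then consider "y = 0" | z where "y = cmod (innerA A (SS z) z)" "normA A z = 1" unfolding NRS_def by blast
    thus "y \<le> cS * cS"
    proof cases
      case 1 thus ?thesis using cS by simp
    next
      case 2
      have "cmod (p (S (S z)) z) \<le> qf p (S (S z)) * qf p z" by (rule herm_CS[OF hp])
      also have "\<dots> \<le> cS * cS" using SSb[of z] 2 by (simp add: N)
      finally show ?thesis using 2 by (simp add: I SS_def)
    qed
  qed
  have op0: "0 \<le> opnormA A P" unfolding opd OPS_def using OPbdd[unfolded OPS_def] by (intro cSup_upper) auto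
  have nr0: "0 \<le> numradA A SS" unfolding nrd NRS_def using NRbdd[unfolded NRS_def] by (intro cSup_upper) auto
  define B where "B = 1/4 * opnormA A P + 1/2 * numradA A SS"
  have B0: "0 \<le> B" unfolding B_def using op0 nr0 by simp
  have pt: "sqrt ((cmod (innerA A (S z) z))\<^sup>2 + (normA A (S z)) ^ 4) \<le> sqrt B" if z: "normA A z = 1" for z
  proof -
    have z': "qf p z = 1" using z by (simp add: N)
    have "(cmod (p (S z) z))^2 + (qf p (S z))^4 \<le> 1/4 * qf p (P z) + 1/2 * cmod (p (S (S z)) z)"
      unfolding P_def by (rule key_pointwise[OF hp K1 z'])
    also have "qf p (P z) \<le> opnormA A P"
    proof -
      have "normA A (P z) \<in> OPS" unfolding OPS_def using z by blast
      hence "normA A (P z) \<le> Sup OPS" using OPbdd by (rule cSup_upper)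
      thus ?thesis by (simp add: opd N)
    qed
    also have "cmod (p (S (S z)) z) \<le> numradA A SS"
    proof -
      have "cmod (innerA A (SS z) z) \<in> NRS" unfolding NRS_def using z by blast
      hence "cmod (innerA A (SS z) z) \<le> Sup NRS" using NRbdd by (rule cSup_upper)
      moreover have "cmod (innerA A (SS z) z) = cmod (p (S (S z)) z)" by (simp add: I SS_def)
      ultimately show ?thesis using nrd by linarith
    qed
    finally have "(cmod (innerA A (S z) z))\<^sup>2 + (normA A (S z)) ^ 4 \<le> B"
      unfolding B_def by (simp add: I N)
    thus ?thesis by (rule real_sqrt_le_mono)
  qed
  define DS where "DS = insert 0 {sqrt ((cmod (innerA A (S z) z))\<^sup>2 + (normA A (S z)) ^ 4) | z. normA A z = 1}"
  have Dd: "dnumradA A S = Sup DS" unfolding dnumradA_def DS_def ..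
  have DSle: "\<forall>y\<in>DS. y \<le> sqrt B" unfolding DS_def using pt B0 by auto
  have "Sup DS \<le> sqrt B" using DSle by (intro cSup_least) (auto simp: DS_def)
  moreover have "0 \<le> Sup DS"
  proof (rule cSup_upper)
    show "0 \<in> DS" unfolding DS_def by simp
    show "bdd_above DS" using DSle by (intro bdd_aboveI[of _ "sqrt B"]) auto
  qed
  ultimately have "(Sup DS)^2 \<le> (sqrt B)^2" by (intro power_mono) auto
  hence "(dnumradA A S)^2 \<le> B" using B0 Dd by simp
  moreover have "(\<lambda>x. sharpA A S (S x) + S (sharpA A S x) + scaleC 4 (sharpA A S (S (sharpA A S (S x))))) = P"
    unfolding P_def J_def ..
  moreover have "(\<lambda>x. S (S x)) = SS" unfolding SS_def ..
  ultimately show ?thesis unfolding B_def by simp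
qed

end
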